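(* Let $d>0$, let $\mathcal{S}$ be the 4-PAM constellation labeled by any Gray labeling $\Phi_{\mathcal{S}}$, and let $\mathcal{B}\subset\{0,1\}^{2N}$ be any binary linear code with at least two codewords. Then $\mathsf{L}(\mathcal{B})\le 1.25$ dB. Moreover, there exist a Gray labeling and a binary linear code $\mathcal{B}$ for which this bound is attained, i.e., $\mathsf{L}(\mathcal{B})=20\log_{10}(2/\sqrt{3})\approx 1.25$ dB.
   Context: $\mathcal{S}=\{s_1,s_2,s_3,s_4\}$ with $s_1=-3d$, $s_2=-d$, $s_3=d$, $s_4=3d$. A labeling is a bijection $\Phi_{\mathcal{S}}:\{0,1\}^2\to\mathcal{S}$, described by $\boldsymbol{q}=[q_1,\dots,q_4]$ where $q_i$ is the integer whose two-bit representation (most significant bit first) is $\Phi_{\mathcal{S}}^{-1}(s_i)$; the Gray labelings are $[0,1,3,2]$, $[0,2,3,1]$, $[1,0,2,3]$, $[2,0,1,3]$. A codeword of $\mathcal{B}$ is written $\boldsymbol{b}=[\boldsymbol{b}[1],\dots,\boldsymbol{b}[N]]$ with $\boldsymbol{b}[k]=[b_1[k],b_2[k]]$, and the CM code is $\mathcal{X}=\{[\Phi_{\mathcal{S}}(\boldsymbol{b}[1]),\dots,\Phi_{\mathcal{S}}(\boldsymbol{b}[N])]:\boldsymbol{b}\in\mathcal{B}\}$. For $\boldsymbol{x},\hat{\boldsymbol{x}}\in\mathcal{S}^N$ and each $k$ with $x[k]\neq\hat{x}[k]$: $\mu^{\mathcal{X}}_k=\sigma^{2,\mathcal{X}}_k=(x[k]-\hat{x}[k])^2/(4d^2)$;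 $\mu^{\mathcal{B}}_k=\sigma^{2,\mathcal{B}}_k=(x[k]-\hat{x}[k])^2/(4d^2)$ except that if $\{x[k],\hat{x}[k]\}=\{s_1,s_4\}$ then $\mu^{\mathcal{B}}_k=3$, $\sigma^{2,\mathcal{B}}_k=1$. Summing over $k$ with $x[k]\neq\hat{x}[k]$, $a^{\mathcal{X}}(\boldsymbol{x},\hat{\boldsymbol{x}})=\sum_k\mu^{\mathcal{X}}_k/\sqrt{\sum_k\sigma^{2,\mathcal{X}}_k}$ and $a^{\mathcal{B}}(\boldsymbol{x},\hat{\boldsymbol{x}})=\sum_k\mu^{\mathcal{B}}_k/\sqrt{\sum_k\sigma^{2,\mathcal{B}}_k}$ (normalized distances of the symbol-wise ML decoder and of the bit-wise max-log decoder under the zero-crossing approximation). The asymptotic loss of the code is $\mathsf{L}(\mathcal{B})=20\log_{10}\Big(\min_{\boldsymbol{x}\neq\hat{\boldsymbol{x}}\in\mathcal{X}}a^{\mathcal{X}}(\boldsymbol{x},\hat{\boldsymbol{x}})\big/\min_{\boldsymbol{x}\neq\hat{\boldsymbol{x}}\in\mathcal{X}}a^{\mathcal{B}}(\boldsymbol{x},\hat{\boldsymbol{x}})\Big)$ dB. *)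

theory Defs
  imports Complex_Main
begin

text \<open>Constellation points s_1 = -3d, s_2 = -d, s_3 = d, s_4 = 3d (index i in 1..4).\<close>
definition pam :: "real \<Rightarrow> nat \<Rightarrow> real" where
  "pam d i = (2 * real i - 5) * d"

text \<open>A labeling is given by q = [q_1,...,q_4] (a list, q_i = q ! (i-1)); the Gray labelings.\<close>
definition gray_labelings :: "nat list set" where
  "gray_labelings = {[0,1,3,2], [0,2,3,1], [1,0,2,3], [2,0,1,3]}"

text \<open>Phi(b1,b2) = s_i where q_i is the integer with two-bit representation b1 b2 (MSB first).\<close>
definition Phi :: "real \<Rightarrow> nat list \<Rightarrow> bool \<times> bool \<Rightarrow> real" where
  "Phi d q b = pam d (THE i. i \<in> {1..4} \<and> q ! (i - 1) = 2 * of_bool (fst b) + of_bool (snd b))"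

definition binwords :: "nat \<Rightarrow> (nat \<Rightarrow> bool) set" where
  "binwords n = {c. \<forall>i\<ge>n. \<not> c i}"

definition binary_linear_code :: "nat \<Rightarrow> (nat \<Rightarrow> bool) set \<Rightarrow> bool" where
  "binary_linear_code n B \<longleftrightarrow> B \<subseteq> binwords n \<and> (\<lambda>_. False) \<in> B \<and>
     (\<forall>x\<in>B. \<forall>y\<in>B. (\<lambda>i. x i \<noteq> y i) \<in> B)"

text \<open>Codeword c of length 2N: b[k] = [b_1[k], b_2[k]] = [c(2k), c(2k+1)] for k = 0..N-1
  (0-based positions). The CM image, a real vector of length N (0 outside positions < N).\<close>
definition modulate :: "real \<Rightarrow> nat list \<Rightarrow> nat \<Rightarrow> (nat \<Rightarrow> bool) \<Rightarrow> (nat \<Rightarrow> real)" where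
  "modulate d q N c = (\<lambda>k. if k < N then Phi d q (c (2 * k), c (2 * k + 1)) else 0)"

definition cm_code :: "real \<Rightarrow> nat list \<Rightarrow> nat \<Rightarrow> (nat \<Rightarrow> bool) set \<Rightarrow> (nat \<Rightarrow> real) set" where
  "cm_code d q N B = modulate d q N ` B"

definition diff_pos :: "nat \<Rightarrow> (nat \<Rightarrow> real) \<Rightarrow> (nat \<Rightarrow> real) \<Rightarrow> nat set" where
  "diff_pos N x y = {k. k < N \<and> x k \<noteq> y k}"

definition muX :: "real \<Rightarrow> real \<Rightarrow> real \<Rightarrow> real" where
  "muX d u v = (u - v)^2 / (4 * d^2)"

definition sigX :: "real \<Rightarrow> real \<Rightarrow> real \<Rightarrow> real" where
  "sigX d u v = (u - v)^2 / (4 * d^2)"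

definition muB :: "real \<Rightarrow> real \<Rightarrow> real \<Rightarrow> real" where
  "muB d u v = (if {u, v} = {pam d 1, pam d 4} then 3 else (u - v)^2 / (4 * d^2))"

definition sigB :: "real \<Rightarrow> real \<Rightarrow> real \<Rightarrow> real" where
  "sigB d u v = (if {u, v} = {pam d 1, pam d 4} then 1 else (u - v)^2 / (4 * d^2))"

definition aX :: "real \<Rightarrow> nat \<Rightarrow> (nat \<Rightarrow> real) \<Rightarrow> (nat \<Rightarrow> real) \<Rightarrow> real" where
  "aX d N x y = (\<Sum>k\<in>diff_pos N x y. muX d (x k) (y k)) /
                 sqrt (\<Sum>k\<in>diff_pos N x y. sigX d (x k) (y k))"

definition aB :: "real \<Rightarrow> nat \<Rightarrow> (nat \<Rightarrow> real) \<Rightarrow> (nat \<Rightarrow> real) \<Rightarrow> real" where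
  "aB d N x y = (\<Sum>k\<in>diff_pos N x y. muB d (x k) (y k)) /
                 sqrt (\<Sum>k\<in>diff_pos N x y. sigB d (x k) (y k))"

definition loss :: "real \<Rightarrow> nat list \<Rightarrow> nat \<Rightarrow> (nat \<Rightarrow> bool) set \<Rightarrow> real" where
  "loss d q N B =
     (let X = cm_code d q N B in
      20 * log 10 (Min {aX d N x y | x y. x \<in> X \<and> y \<in> X \<and> x \<noteq> y} /
                   Min {aB d N x y | x y. x \<in> X \<and> y \<in> X \<and> x \<noteq> y}))"

end

theory Submission
  imports Defs
begin

lemma pam1: "pam d 1 = -3*d" and pam2: "pam d 2 = -d" and pam3: "pam d 3 = d" and pam4: "pam d 4 = 3*d"
  by (simp_all add: pam_def)

lemma pam_inj: "d > 0 \<Longrightarrow> pam d i = pam d j \<Longrightarrow> i = j"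
  by (simp add: pam_def)

lemma ex1_of_bex: assumes "\<exists>i\<in>A. P i \<and> (\<forall>j\<in>A. P j \<longrightarrow> j = i)" shows "\<exists>!i. i \<in> A \<and> P i"
  using assms by (auto intro: ex1I)

lemma ex1_lab: assumes "q \<in> gray_labelings" "v < 4"
  shows "\<exists>!i. i \<in> {1..4} \<and> q ! (i - 1) = v"
proof -
  have e: "{1..4::nat} = {1,2,3,4}" by auto
  have "v = 0 \<or> v = 1 \<or> v = 2 \<or> v = 3" using assms(2) by auto
  moreover have "q = [0,1,3,2] \<or> q = [0,2,3,1] \<or> q = [1,0,2,3] \<or> q = [2,0,1,3]"
    using assms(1) unfolding gray_labelings_def by simp
  ultimately have "\<exists>i\<in>{1,2,3,4::nat}. q ! (i - 1) = v \<and> (\<forall>j\<in>{1,2,3,4::nat}. q ! (j - 1) = v \<longrightarrow> j = i)"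
    by (elim disjE; simp)
  then show ?thesis unfolding e by (rule ex1_of_bex)
qed

lemma Phi_prop: assumes "q \<in> gray_labelings"
  shows "\<exists>i. i \<in> {1..4} \<and> q ! (i - 1) = 2 * of_bool (fst b) + of_bool (snd b) \<and> Phi d q b = pam d i"
proof -
  have "(2 * of_bool (fst b) + of_bool (snd b) :: nat) < 4" by (cases "fst b"; cases "snd b"; simp)
  from theI'[OF ex1_lab[OF assms this]] show ?thesis unfolding Phi_def by blast
qed

lemma Phi_inj: assumes "d > 0" "q \<in> gray_labelings" "Phi d q a = Phi d q b"
  shows "a = b"
proof -
  obtain i where i: "q ! (i - 1) = 2 * of_bool (fst a) + of_bool (snd a)" "Phi d q a = pam d i"
    using Phi_prop[OF assms(2)] by blast
  obtain j where j: "q ! (j - 1) = 2 * of_bool (fst b) + of_bool (snd b)" "Phi d q b = pam d j"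
    using Phi_prop[OF assms(2)] by blast
  have "i = j" using pam_inj[OF assms(1)] i j assms(3) by simp
  then have "(2 * of_bool (fst a) + of_bool (snd a) :: nat) = 2 * of_bool (fst b) + of_bool (snd b)"
    using i j by simp
  then show ?thesis
    by (cases a; cases b) (rename_tac a1 a2 b1 b2, case_tac a1; case_tac a2; case_tac b1; case_tac b2; simp)
qed

lemma Phi_eq: assumes "i \<in> {1..4}" "q ! (i - 1) = 2 * of_bool (fst b) + of_bool (snd b)"
  "\<And>j. j \<in> {1..4} \<Longrightarrow> q ! (j - 1) = 2 * of_bool (fst b) + of_bool (snd b) \<Longrightarrow> j = i"
  shows "Phi d q b = pam d i"
proof -
  have "(THE j. j \<in> {1..4} \<and> q ! (j - 1) = 2 * of_bool (fst b) + of_bool (snd b)) = i"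
    by (rule the_equality) (use assms in blast)+
  then show ?thesis unfolding Phi_def by simp
qed

lemma mod_neq: assumes "d > 0" "q \<in> gray_labelings" "b1 \<in> binwords (2*N)" "b2 \<in> binwords (2*N)" "b1 \<noteq> b2"
  shows "modulate d q N b1 \<noteq> modulate d q N b2"
proof -
  obtain i where i: "b1 i \<noteq> b2 i" using assms(5) by blast
  have "i < 2*N" using i assms(3,4) unfolding binwords_def by (metis mem_Collect_eq not_le)
  define k where "k = i div 2"
  have kN: "k < N" using \<open>i < 2*N\<close> k_def by simp
  have "(b1 (2*k), b1 (2*k+1)) \<noteq> (b2 (2*k), b2 (2*k+1))"
  proof
    assume h: "(b1 (2*k), b1 (2*k+1)) = (b2 (2*k), b2 (2*k+1))"
    have "i = 2*k \<or> i = 2*k+1" unfolding k_def by presburger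
    then show False using h i by auto
  qed
  then have "Phi d q (b1 (2*k), b1 (2*k+1)) \<noteq> Phi d q (b2 (2*k), b2 (2*k+1))"
    using Phi_inj[OF assms(1,2)] by blast
  then show ?thesis unfolding modulate_def using kN by (metis)
qed

lemma pair_ineq:
  assumes d: "d > 0" and F: "finite F" "F \<noteq> {}" and ne: "\<forall>k\<in>F. x k \<noteq> y k"
  shows "sqrt 3 / 2 * ((\<Sum>k\<in>F. muX d (x k) (y k)) / sqrt (\<Sum>k\<in>F. sigX d (x k) (y k)))
          \<le> (\<Sum>k\<in>F. muB d (x k) (y k)) / sqrt (\<Sum>k\<in>F. sigB d (x k) (y k))"
    and "(\<Sum>k\<in>F. muX d (x k) (y k)) / sqrt (\<Sum>k\<in>F. sigX d (x k) (y k)) > 0"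
proof -
  define sp where "sp k = ({x k, y k} = {pam d 1, pam d 4})" for k
  define r where "r k = (if sp k then 0 else muX d (x k) (y k))" for k
  define s where "s k = (if sp k then 1 else 0::real)" for k
  have mpos: "muX d (x k) (y k) > 0" if "k \<in> F" for k
    using ne that d unfolding muX_def by (simp add: field_simps)
  have h1: "muX d (x k) (y k) = r k + 9 * s k" if "k \<in> F" for k
  proof (cases "sp k")
    case True
    then have "(x k = -3*d \<and> y k = 3*d) \<or> (x k = 3*d \<and> y k = -3*d)"
      unfolding sp_def pam1 pam4 using d by (auto simp: doubleton_eq_iff)
    then show ?thesis using True d unfolding r_def s_def muX_def by (auto simp: power2_eq_square field_simps)
  qed (simp add: r_def s_def)
  have h2: "muB d (x k) (y k) = r k + 3 * s k" for k
    unfolding muB_def r_def s_def sp_def muX_def by simp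
  have h3: "sigB d (x k) (y k) = r k + s k" for k
    unfolding sigB_def r_def s_def sp_def muX_def by simp
  have h4: "sigX d (x k) (y k) = muX d (x k) (y k)" for k
    unfolding sigX_def muX_def by simp
  define A where "A = (\<Sum>k\<in>F. r k)"
  define n where "n = (\<Sum>k\<in>F. s k)"
  have A0: "A \<ge> 0" unfolding A_def r_def
    by (rule sum_nonneg) (use mpos in \<open>auto intro: less_imp_le\<close>)
  have n0: "n \<ge> 0" unfolding n_def s_def by (auto intro!: sum_nonneg)
  have SX: "(\<Sum>k\<in>F. muX d (x k) (y k)) = A + 9*n"
    unfolding A_def n_def using h1 by (simp add: sum.distrib sum_distrib_left)
  have SXs: "(\<Sum>k\<in>F. sigX d (x k) (y k)) = A + 9*n" using SX h4 by simp
  have SB: "(\<Sum>k\<in>F. muB d (x k) (y k)) = A + 3*n"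
    unfolding A_def n_def using h2 by (simp add: sum.distrib sum_distrib_left)
  have SBs: "(\<Sum>k\<in>F. sigB d (x k) (y k)) = A + n"
    unfolding A_def n_def using h3 by (simp add: sum.distrib)
  have pos: "A + n > 0"
  proof -
    have "(\<Sum>k\<in>F. r k + s k) > 0"
      using F by (rule sum_pos) (use mpos in \<open>auto simp: r_def s_def\<close>)
    then show ?thesis unfolding A_def n_def by (simp add: sum.distrib)
  qed
  have P9: "A + 9*n > 0" using pos n0 by linarith
  have eqX: "(A + 9*n) / sqrt (A + 9*n) = sqrt (A + 9*n)"
    using P9 by (metis real_div_sqrt less_imp_le)
  show "(\<Sum>k\<in>F. muX d (x k) (y k)) / sqrt (\<Sum>k\<in>F. sigX d (x k) (y k)) > 0"
    unfolding SX SXs eqX using P9 by simp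
  have key: "3 * ((A + 9*n) * (A + n)) \<le> (2*(A + 3*n))^2"
  proof -
    have "0 \<le> (A - 3*n)^2" by simp
    then show ?thesis by (simp add: power2_eq_square algebra_simps)
  qed
  have "sqrt 3 * sqrt (A + 9*n) * sqrt (A + n) \<le> 2 * (A + 3*n)"
  proof -
    have "sqrt 3 * sqrt (A + 9*n) * sqrt (A + n) = sqrt (3 * ((A + 9*n) * (A + n)))"
      by (simp add: real_sqrt_mult)
    also have "\<dots> \<le> sqrt ((2*(A + 3*n))^2)" using key by (rule real_sqrt_le_mono)
    also have "\<dots> = 2 * (A + 3*n)" using A0 n0 by simp
    finally show ?thesis .
  qed
  note key2 = this
  have sp0: "sqrt (A + n) > 0" using pos by simp
  have "sqrt 3 / 2 * sqrt (A + 9*n) = (sqrt 3 * sqrt (A + 9*n) * sqrt (A + n)) / (2 * sqrt (A + n))"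
    using sp0 by simp
  also have "\<dots> \<le> 2 * (A + 3*n) / (2 * sqrt (A + n))"
    using key2 sp0 by (intro divide_right_mono) auto
  also have "\<dots> = (A + 3*n) / sqrt (A + n)"
    by (rule mult_divide_mult_cancel_left) simp
  finally have "sqrt 3 / 2 * sqrt (A + 9*n) \<le> (A + 3*n) / sqrt (A + n)" .
  then show "sqrt 3 / 2 * ((\<Sum>k\<in>F. muX d (x k) (y k)) / sqrt (\<Sum>k\<in>F. sigX d (x k) (y k)))
          \<le> (\<Sum>k\<in>F. muB d (x k) (y k)) / sqrt (\<Sum>k\<in>F. sigB d (x k) (y k))"
    unfolding SX SXs SB SBs eqX .
qed


lemma mod_out: "k \<ge> N \<Longrightarrow> modulate d q N c k = 0"
  by (simp add: modulate_def)

lemma dp_props: assumes "x = modulate d q N c1" "y = modulate d q N c2" "x \<noteq> y"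
  shows "finite (diff_pos N x y)" "diff_pos N x y \<noteq> {}" "\<forall>k\<in>diff_pos N x y. x k \<noteq> y k"
proof -
  show "finite (diff_pos N x y)" unfolding diff_pos_def by simp
  show "\<forall>k\<in>diff_pos N x y. x k \<noteq> y k" unfolding diff_pos_def by simp
  obtain k where k: "x k \<noteq> y k" using assms(3) by blast
  have "k < N" using k assms(1,2) mod_out by (metis not_le)
  then show "diff_pos N x y \<noteq> {}" using k unfolding diff_pos_def by blast
qed

lemma aX_sym: "aX d N x y = aX d N y x"
proof -
  have "diff_pos N x y = diff_pos N y x" unfolding diff_pos_def by auto
  moreover have "muX d u v = muX d v u" "sigX d u v = sigX d v u" for u v
    unfolding muX_def sigX_def by (simp_all add: power2_commute)
  ultimately show ?thesis unfolding aX_def by simp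
qed

lemma aB_sym: "aB d N x y = aB d N y x"
proof -
  have "diff_pos N x y = diff_pos N y x" unfolding diff_pos_def by auto
  moreover have "muB d u v = muB d v u" "sigB d u v = sigB d v u" for u v
    unfolding muB_def sigB_def by (simp_all add: power2_commute insert_commute)
  ultimately show ?thesis unfolding aB_def by simp
qed

lemma part1:
  assumes d: "d > 0" and gq: "q \<in> gray_labelings" and blc: "binary_linear_code (2 * N) B"
    and cB: "card B \<ge> 2"
  shows "loss d q N B \<le> 20 * log 10 (2 / sqrt 3)"
proof -
  have finB: "finite B" using cB by (metis card.infinite not_numeral_le_zero)
  have Bw: "B \<subseteq> binwords (2*N)" using blc unfolding binary_linear_code_def by blast
  obtain b1 where b1: "b1 \<in> B" using cB by (metis card.empty ex_in_conv not_numeral_le_zero)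
  have "card (B - {b1}) \<ge> 1" using cB b1 finB by (simp add: card_Diff_singleton)
  then have "B - {b1} \<noteq> {}" by (metis card.empty not_one_le_zero)
  then obtain b2 where b2: "b2 \<in> B" "b2 \<noteq> b1" by blast
  define X where "X = cm_code d q N B"
  define SX where "SX = {aX d N x y |x y. x \<in> X \<and> y \<in> X \<and> x \<noteq> y}"
  define SB where "SB = {aB d N x y |x y. x \<in> X \<and> y \<in> X \<and> x \<noteq> y}"
  have finX: "finite X" unfolding X_def cm_code_def using finB by simp
  have "SX \<subseteq> (\<lambda>(x,y). aX d N x y) ` (X \<times> X)" unfolding SX_def by auto
  then have fSX: "finite SX" by (rule finite_subset) (use finX in simp)
  have "SB \<subseteq> (\<lambda>(x,y). aB d N x y) ` (X \<times> X)" unfolding SB_def by auto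
  then have fSB: "finite SB" by (rule finite_subset) (use finX in simp)
  have neq: "modulate d q N b1 \<noteq> modulate d q N b2"
    using mod_neq[OF d gq] b1 b2 Bw by blast
  have inX: "modulate d q N b1 \<in> X" "modulate d q N b2 \<in> X" unfolding X_def cm_code_def using b1 b2 by auto
  have neX: "SX \<noteq> {}" unfolding SX_def using inX neq by blast
  have neB: "SB \<noteq> {}" unfolding SB_def using inX neq by blast
  have pair: "sqrt 3 / 2 * aX d N x y \<le> aB d N x y \<and> aX d N x y > 0"
    if xyX: "x \<in> X" "y \<in> X" "x \<noteq> y" for x y
  proof -
    obtain c1 c2 where c: "x = modulate d q N c1" "y = modulate d q N c2"
      using xyX(1,2) unfolding X_def cm_code_def by blast
    note dp = dp_props[OF c xyX(3)]
    show ?thesis using pair_ineq[OF d dp] unfolding aX_def aB_def by blast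
  qed
  define mX where "mX = Min SX"
  define mB where "mB = Min SB"
  have "mB \<in> SB" unfolding mB_def using fSB neB by simp
  then obtain x y where xy: "x \<in> X" "y \<in> X" "x \<noteq> y" "mB = aB d N x y" unfolding SB_def by blast
  have "aX d N x y \<in> SX" unfolding SX_def using xy by blast
  then have "mX \<le> aX d N x y" unfolding mX_def using fSX by simp
  have "mX \<in> SX" unfolding mX_def using fSX neX by simp
  then have mXpos: "mX > 0" unfolding SX_def using pair by blast
  have "sqrt 3 / 2 * mX \<le> sqrt 3 / 2 * aX d N x y"
    using \<open>mX \<le> aX d N x y\<close> by simp
  also have "\<dots> \<le> mB" using pair[OF xy(1-3)] xy(4) by simp
  finally have mBge: "sqrt 3 / 2 * mX \<le> mB" .
  have "sqrt 3 / 2 * mX > 0" using mXpos by simp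
  then have mBpos: "mB > 0" using mBge by linarith
  have ratio: "mX / mB \<le> 2 / sqrt 3"
  proof -
    have "mX \<le> 2 / sqrt 3 * mB" using mBge by (simp add: field_simps)
    then show ?thesis using mBpos by (simp add: divide_le_eq)
  qed
  have "log 10 (mX / mB) \<le> log 10 (2 / sqrt 3)"
    using ratio mXpos mBpos by (simp add: log_le_cancel_iff)
  moreover have "loss d q N B = 20 * log 10 (mX / mB)"
    unfolding loss_def Let_def mX_def mB_def SX_def SB_def X_def ..
  ultimately show ?thesis by simp
qed


lemma four: "j \<in> {1..4::nat} \<Longrightarrow> j = 1 \<or> j = 2 \<or> j = 3 \<or> j = 4"
  by auto

lemma Phi_q: "Phi d [0,1,3,2] (False,False) = pam d 1"
  "Phi d [0,1,3,2] (True,False) = pam d 4"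
  "Phi d [0,1,3,2] (False,True) = pam d 2"
proof -
  show "Phi d [0,1,3,2] (False,False) = pam d 1"
  proof (rule Phi_eq)
    fix j assume "j \<in> {1..4::nat}" "[0,1,3,2::nat] ! (j - 1) = 2 * of_bool (fst (False,False)) + of_bool (snd (False,False))"
    then show "j = 1" using four by (elim disjE four[THEN disjE]) auto
  qed auto
  show "Phi d [0,1,3,2] (True,False) = pam d 4"
  proof (rule Phi_eq)
    fix j assume "j \<in> {1..4::nat}" "[0,1,3,2::nat] ! (j - 1) = 2 * of_bool (fst (True,False)) + of_bool (snd (True,False))"
    then show "j = 4" using four by (elim disjE four[THEN disjE]) auto
  qed auto
  show "Phi d [0,1,3,2] (False,True) = pam d 2"
  proof (rule Phi_eq)
    fix j assume "j \<in> {1..4::nat}" "[0,1,3,2::nat] ! (j - 1) = 2 * of_bool (fst (False,True)) + of_bool (snd (False,True))"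
    then show "j = 2" using four by (elim disjE four[THEN disjE]) auto
  qed auto
qed


lemma part2:
  assumes d: "d > 0"
  shows "\<exists>q N B. q \<in> gray_labelings \<and> binary_linear_code (2 * N) B \<and> card B \<ge> 2 \<and>
            loss d q N B = 20 * log 10 (2 / sqrt 3)"
proof -
  define c where "c = (\<lambda>i::nat. i = 0 \<or> i = 3 \<or> i = 5 \<or> i = 7)"
  define q where "q = [0,1,3,2::nat]"
  define B where "B = {(\<lambda>_. False), c}"
  have gq: "q \<in> gray_labelings" unfolding q_def gray_labelings_def by simp
  have cne: "c \<noteq> (\<lambda>_. False)" unfolding c_def by (metis)
  have blc: "binary_linear_code (2 * 4) B"
    unfolding binary_linear_code_def binwords_def B_def
  proof (intro conjI)
    show "{\<lambda>_. False, c} \<subseteq> {c. \<forall>i\<ge>2 * 4. \<not> c i}" unfolding c_def by auto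
    show "(\<lambda>_. False) \<in> {\<lambda>_. False, c}" by simp
    show "\<forall>x\<in>{\<lambda>_. False, c}. \<forall>y\<in>{\<lambda>_. False, c}. (\<lambda>i. x i \<noteq> y i) \<in> {\<lambda>_. False, c}"
      by auto
  qed
  have cB: "card B \<ge> 2" unfolding B_def using cne by simp
  define x0 where "x0 = modulate d q 4 (\<lambda>_. False)"
  define x1 where "x1 = modulate d q 4 c"
  have P1: "Phi d q (False, False) = pam d 1" unfolding q_def by (rule Phi_q(1))
  have P4: "Phi d q (True, False) = pam d 4" unfolding q_def by (rule Phi_q(2))
  have P2: "Phi d q (False, True) = pam d 2" unfolding q_def by (rule Phi_q(3))
  have v0: "x0 k = -3*d" if "k < 4" for k
  proof -
    have "x0 k = Phi d q (False, False)" unfolding x0_def modulate_def using that by simp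
    then show ?thesis using P1 pam1 by simp
  qed
  have v10: "x1 0 = 3*d"
  proof -
    have "x1 0 = Phi d q (c 0, c 1)" unfolding x1_def modulate_def by simp
    moreover have "c 0 = True" "c 1 = False" unfolding c_def by simp_all
    ultimately show ?thesis using P4 pam4 by simp
  qed
  have v11: "x1 k = -d" if "k \<in> {1,2,3}" for k
  proof -
    have "x1 k = Phi d q (c (2*k), c (2*k+1))" unfolding x1_def modulate_def using that by auto
    moreover have "c (2*k) = False" "c (2*k+1) = True" unfolding c_def using that by auto
    ultimately show ?thesis using P2 pam2 by simp
  qed
  have dp: "diff_pos 4 x0 x1 = {0,1,2,3}"
  proof -
    have "k \<in> {0,1,2,3} \<longleftrightarrow> k < (4::nat)" for k by auto
    moreover have "x0 k \<noteq> x1 k" if "k < 4" for k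
    proof -
      have "k = 0 \<or> k \<in> {1,2,3}" using that by auto
      then show ?thesis
      proof
        assume "k = 0" then show ?thesis using v0[OF that] v10 d by simp
      next
        assume "k \<in> {1,2,3}" then show ?thesis using v0[OF that] v11 d by simp
      qed
    qed
    ultimately have "diff_pos 4 x0 x1 = {k. k < 4}" unfolding diff_pos_def by blast
    moreover have "{k. k < (4::nat)} = {0,1,2,3}" by auto
    ultimately show ?thesis by simp
  qed
  have "x0 0 \<noteq> x1 0" using v0[of 0] v10 d by simp
  then have x01: "x0 \<noteq> x1" by metis
  have d2: "d^2 > 0" using d by simp
  have e36: "(-3*d - 3*d)^2 = 9 * (4 * d^2)" by (simp add: power2_eq_square algebra_simps)
  have e4: "(-3*d - -d)^2 = 1 * (4 * d^2)" by (simp add: power2_eq_square algebra_simps)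
  have eqs: "{-3*d, 3*d} = {pam d 1, pam d 4}" unfolding pam1 pam4 by simp
  have m1: "muX d (-3*d) (3*d) = 9" "sigX d (-3*d) (3*d) = 9"
    "muB d (-3*d) (3*d) = 3" "sigB d (-3*d) (3*d) = 1"
    unfolding muX_def sigX_def muB_def sigB_def using eqs e36 d2 by simp_all
  have ne: "{-3*d, -d} \<noteq> {pam d 1, pam d 4}" using d unfolding pam1 pam4 by (auto simp: doubleton_eq_iff)
  have m2: "muX d (-3*d) (-d) = 1" "sigX d (-3*d) (-d) = 1"
    "muB d (-3*d) (-d) = 1" "sigB d (-3*d) (-d) = 1"
    unfolding muX_def sigX_def muB_def sigB_def using ne e4 d2 by simp_all
  have aXv: "aX d 4 x0 x1 = 12 / sqrt 12"
    unfolding aX_def dp using v0 v10 v11 m1 m2 by simp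
  have aBv: "aB d 4 x0 x1 = 3"
    unfolding aB_def dp using v0 v10 v11 m1 m2 by simp
  have X: "cm_code d q 4 B = {x0, x1}" unfolding cm_code_def B_def x0_def x1_def by simp
  have SX: "{aX d 4 x y |x y. x \<in> {x0,x1} \<and> y \<in> {x0,x1} \<and> x \<noteq> y} = {aX d 4 x0 x1}"
    using x01 aX_sym by blast
  have SB: "{aB d 4 x y |x y. x \<in> {x0,x1} \<and> y \<in> {x0,x1} \<and> x \<noteq> y} = {aB d 4 x0 x1}"
    using x01 aB_sym by blast
  have s12: "sqrt 12 = 2 * sqrt 3"
    by (metis real_sqrt_mult real_sqrt_four mult_numeral_left_semiring_numeral num_double numeral_times_numeral)
  have r: "12 / sqrt 12 / 3 = 2 / sqrt (3::real)"
  proof -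
    have "12 / sqrt 12 = sqrt (12::real)" by (metis real_div_sqrt zero_le_numeral)
    moreover have "sqrt 3 * sqrt 3 = (3::real)" by simp
    ultimately show ?thesis unfolding s12 by (simp add: field_simps)
  qed
  have "loss d q 4 B = 20 * log 10 (2 / sqrt 3)"
    unfolding loss_def Let_def X SX SB aXv aBv using r by simp
  then show ?thesis using gq blc cB by blast
qed

theorem corollary1:
  fixes d :: real
  assumes "d > 0"
  shows "(\<forall>q N B. q \<in> gray_labelings \<longrightarrow> binary_linear_code (2 * N) B \<longrightarrow> card B \<ge> 2 \<longrightarrow>
            loss d q N B \<le> 20 * log 10 (2 / sqrt 3))
       \<and> (\<exists>q N B. q \<in> gray_labelings \<and> binary_linear_code (2 * N) B \<and> card B \<ge> 2 \<and>
            loss d q N B = 20 * log 10 (2 / sqrt 3))"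
  using part1[OF assms] part2[OF assms] by blast

end
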